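(* Let $L\in\mathbb N$, ${\bf A}\in\mathbb R^{M\times N}$, $\mathcal P_A={\bf A}^\dagger{\bf A}$, and let $\tilde{\bf x}^{(1)},\tilde{\bf x}^{(2)}:[0,\infty)\to\mathbb R^N$ be functions whose entries are all positive and bounded above and bounded away from zero, uniformly in $t$. Suppose $\lim_{t\to\infty}{\bf A}[\tilde{\bf x}^{(1)}(t)-\tilde{\bf x}^{(2)}(t)]=0$ and $$\begin{cases}\lim_{t\to\infty}(I-\mathcal P_A)[\log(\tilde{\bf x}^{(1)}(t))-\log(\tilde{\bf x}^{(2)}(t))]=0 & L=2,\\ \lim_{t\to\infty}(I-\mathcal P_A)[(\tilde{\bf x}^{(1)}(t))^{\odot(\frac2L-1)}-(\tilde{\bf x}^{(2)}(t))^{\odot(\frac2L-1)}]=0 & L\neq2.\end{cases}$$ Then $\lim_{t\to\infty}(\tilde{\bf x}^{(1)}(t)-\tilde{\bf x}^{(2)}(t))=0$.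
   Context: $\odot$ denotes entrywise power and $\log$ acts entrywise; ${\bf A}^\dagger$ is the Moore–Penrose pseudoinverse. *)

theory Defs
  imports "HOL-Analysis.Analysis"
begin

definition pinv :: "real^'n^'m \<Rightarrow> real^'m^'n" where
  "pinv A = (THE B. A ** B ** A = A \<and> B ** A ** B = B \<and>
               transpose (A ** B) = A ** B \<and> transpose (B ** A) = B ** A)"

definition epowr :: "real^'n \<Rightarrow> real \<Rightarrow> real^'n" where
  "epowr x p = (\<chi> i. (x $ i) powr p)"

definition elog :: "real^'n \<Rightarrow> real^'n" where
  "elog x = (\<chi> i. ln (x $ i))"

end

theory Submission
  imports Defs
begin

definition oproj :: "'a::euclidean_space set \<Rightarrow> 'a \<Rightarrow> 'a" where
  "oproj S x = (THE y. y \<in> S \<and> (\<forall>w\<in>S. (x - y) \<bullet> w = 0))"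

lemma oproj_ex:
  fixes S :: "'a::euclidean_space set"
  assumes "subspace S"
  shows "\<exists>y. y \<in> S \<and> (\<forall>w\<in>S. (x - y) \<bullet> w = 0)"
proof -
  obtain y z where yz: "y \<in> span S" "\<And>w. w \<in> span S \<Longrightarrow> orthogonal z w" "x = y + z"
    using orthogonal_subspace_decomp_exists[of S x] by blast
  have "y \<in> S" using yz(1) assms by (metis span_eq_iff)
  moreover have "\<forall>w\<in>S. (x - y) \<bullet> w = 0"
    using yz(2,3) by (simp add: orthogonal_def span_base)
  ultimately show ?thesis by blast
qed

lemma oproj_uniq:
  assumes "subspace S" "y \<in> S" "\<forall>w\<in>S. (x - y) \<bullet> w = 0" "y' \<in> S" "\<forall>w\<in>S. (x - y') \<bullet> w = 0"
  shows "y = y'"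
proof -
  have d: "y - y' \<in> S" using assms by (simp add: subspace_diff)
  have "(x - y') \<bullet> (y - y') - (x - y) \<bullet> (y - y') = 0" using assms d by simp
  hence "(y - y') \<bullet> (y - y') = 0" by (simp add: inner_diff_left)
  thus ?thesis by simp
qed

lemma oproj:
  assumes "subspace S"
  shows "oproj S x \<in> S" "\<forall>w\<in>S. (x - oproj S x) \<bullet> w = 0"
proof -
  have "\<exists>!y. y \<in> S \<and> (\<forall>w\<in>S. (x - y) \<bullet> w = 0)"
    using oproj_ex[OF assms] oproj_uniq[OF assms] by blast
  from theI'[OF this] show "oproj S x \<in> S" "\<forall>w\<in>S. (x - oproj S x) \<bullet> w = 0"
    unfolding oproj_def by auto
qed

lemma oproj_eq:
  assumes "subspace S" "y \<in> S" "\<forall>w\<in>S. (x - y) \<bullet> w = 0"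
  shows "oproj S x = y"
  using oproj_uniq[OF assms(1) oproj[OF assms(1)] assms(2,3)] .

lemma oproj_id: "subspace S \<Longrightarrow> x \<in> S \<Longrightarrow> oproj S x = x"
  by (rule oproj_eq) auto

lemma oproj_sym:
  assumes "subspace S"
  shows "oproj S x \<bullet> z = x \<bullet> oproj S z"
proof -
  have "(x - oproj S x) \<bullet> oproj S z = 0" using oproj[OF assms] by blast
  moreover have "(z - oproj S z) \<bullet> oproj S x = 0" using oproj[OF assms] by blast
  ultimately show ?thesis by (metis inner_commute inner_diff_left eq_iff_diff_eq_0)
qed

lemma sym_matrix:
  fixes M :: "real^'n^'n"
  assumes "\<And>x y. (M *v x) \<bullet> y = x \<bullet> (M *v y)"
  shows "transpose M = M"
proof -
  have "transpose M *v y = M *v y" for y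
  proof -
    have "x \<bullet> (transpose M *v y - M *v y) = 0" for x
      using assms[of x y] dot_lmul_matrix[of y M x]
      by (simp add: inner_diff_right inner_commute)
    from this[of "transpose M *v y - M *v y"] show ?thesis by simp
  qed
  thus ?thesis by (simp add: matrix_eq)
qed

lemma subspace_range_mv: "subspace (range (\<lambda>x. (M::real^'a^'b) *v x))"
  unfolding subspace_def
  by (metis (no_types, lifting) matrix_vector_mult_0_right matrix_vector_mult_scaleR matrix_vector_right_distrib rangeE rangeI)

lemma subspace_range_vm: "subspace (range (\<lambda>x. x v* (M::real^'a^'b)))"
  using subspace_range_mv[of "transpose M"] by simp

lemma A_oprojW:
  fixes A :: "real^'n^'m"
  shows "A *v oproj (range (\<lambda>z. z v* A)) x = A *v x"
proof -
  let ?W = "range (\<lambda>z. z v* A)"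
  have s: "subspace ?W" by (rule subspace_range_vm)
  have "(A *v (x - oproj ?W x)) \<bullet> z = 0" for z
  proof -
    have "(x - oproj ?W x) \<bullet> (z v* A) = 0" using oproj(2)[OF s, of x] by blast
    thus ?thesis using dot_lmul_matrix[of z A "x - oproj ?W x"] by (simp add: inner_commute)
  qed
  from this[of "A *v (x - oproj ?W x)"] show ?thesis by (simp add: matrix_vector_mult_diff_distrib)
qed

lemma W_inj:
  fixes A :: "real^'n^'m"
  assumes "u \<in> range (\<lambda>z. z v* A)" "u' \<in> range (\<lambda>z. z v* A)" "A *v u = A *v u'"
  shows "u = u'"
proof -
  obtain z1 z2 where "u = z1 v* A" "u' = z2 v* A" using assms(1,2) by auto
  hence z: "u - u' = (z1 - z2) v* A" by (metis transpose_matrix_vector matrix_vector_mult_diff_distrib)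
  define z where "z = z1 - z2"
  have "(u - u') \<bullet> (u - u') = (u - u') \<bullet> (z v* A)" using z z_def by simp
  also have "\<dots> = (z v* A) \<bullet> (u - u')" by (simp add: inner_commute)
  also have "\<dots> = z \<bullet> (A *v (u - u'))" by (rule dot_lmul_matrix)
  also have "\<dots> = 0" using assms(3) by (simp add: matrix_vector_mult_diff_distrib)
  finally show ?thesis by simp
qed

lemma pinv_exists:
  fixes A :: "real^'n^'m"
  shows "\<exists>B. A ** B ** A = A \<and> B ** A ** B = B \<and>
               transpose (A ** B) = A ** B \<and> transpose (B ** A) = B ** A"
proof -
  define V where "V = range (\<lambda>x. A *v x)"
  define W where "W = range (\<lambda>z. z v* A)"
  have sV: "subspace V" unfolding V_def by (rule subspace_range_mv)
  have sW: "subspace W" unfolding W_def by (rule subspace_range_vm)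
  define b where "b y = oproj W (SOME x. A *v x = oproj V y)" for y
  have b1: "b y \<in> W" for y unfolding b_def by (rule oproj(1)[OF sW])
  have b2: "A *v b y = oproj V y" for y
  proof -
    have "\<exists>x. A *v x = oproj V y" using oproj(1)[OF sV, of y] unfolding V_def by auto
    hence "A *v (SOME x. A *v x = oproj V y) = oproj V y" by (rule someI_ex)
    thus ?thesis unfolding b_def W_def by (simp add: A_oprojW)
  qed
  have buniq: "u \<in> W \<Longrightarrow> A *v u = oproj V y \<Longrightarrow> b y = u" for u y
    using W_inj[of "b y" A u] b1 b2 unfolding W_def by auto
  have lin: "linear b"
  proof
    fix y y'
    show "b (y + y') = b y + b y'"
    proof (rule buniq)
      show "b y + b y' \<in> W" using b1 sW by (simp add: subspace_add)
      have "A *v (b y + b y') = oproj V y + oproj V y'" by (simp add: b2 matrix_vector_right_distrib)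
      also have "\<dots> = oproj V (y + y')"
      proof (rule oproj_eq[OF sV, symmetric])
        show "oproj V y + oproj V y' \<in> V" using oproj(1)[OF sV] sV by (simp add: subspace_add)
        show "\<forall>w\<in>V. (y + y' - (oproj V y + oproj V y')) \<bullet> w = 0"
          using oproj(2)[OF sV, of y] oproj(2)[OF sV, of y']
          by (metis (no_types, lifting) add_diff_add inner_add_left add.right_neutral)
      qed
      finally show "A *v (b y + b y') = oproj V (y + y')" .
    qed
  next
    fix c :: real and y
    show "b (c *\<^sub>R y) = c *\<^sub>R b y"
    proof (rule buniq)
      show "c *\<^sub>R b y \<in> W" using b1 sW by (simp add: subspace_scale)
      have "A *v (c *\<^sub>R b y) = c *\<^sub>R oproj V y" by (simp add: b2 matrix_vector_mult_scaleR)
      also have "\<dots> = oproj V (c *\<^sub>R y)"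
      proof (rule oproj_eq[OF sV, symmetric])
        show "c *\<^sub>R oproj V y \<in> V" using oproj(1)[OF sV] sV by (simp add: subspace_scale)
        show "\<forall>w\<in>V. (c *\<^sub>R y - c *\<^sub>R oproj V y) \<bullet> w = 0"
          using oproj(2)[OF sV, of y] by (simp add: scaleR_diff_right[symmetric])
      qed
      finally show "A *v (c *\<^sub>R b y) = oproj V (c *\<^sub>R y)" .
    qed
  qed
  define B where "B = matrix b"
  have Bv: "B *v y = b y" for y unfolding B_def using lin by (simp add: matrix_works linear_matrix_vector_mul_eq)
  have AV: "A *v x \<in> V" for x unfolding V_def by auto
  have p1: "A ** B ** A = A"
    by (simp add: matrix_eq matrix_vector_mul_assoc[symmetric] Bv b2 AV oproj_id[OF sV])
  have p2: "B ** A ** B = B"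
  proof -
    have "b (A *v b y) = b y" for y
      by (rule buniq[OF b1]) (simp add: b2 oproj_id[OF sV] oproj(1)[OF sV])
    thus ?thesis by (simp add: matrix_eq matrix_vector_mul_assoc[symmetric] Bv)
  qed
  have p3: "transpose (A ** B) = A ** B"
    by (rule sym_matrix) (simp add: matrix_vector_mul_assoc[symmetric] Bv b2 oproj_sym[OF sV])
  have BA: "b (A *v x) = oproj W x" for x
  proof (rule buniq)
    show "oproj W x \<in> W" by (rule oproj(1)[OF sW])
    show "A *v oproj W x = oproj V (A *v x)" unfolding W_def by (simp add: A_oprojW AV oproj_id[OF sV])
  qed
  have p4: "transpose (B ** A) = B ** A"
    by (rule sym_matrix) (simp add: matrix_vector_mul_assoc[symmetric] Bv BA oproj_sym[OF sW])
  show ?thesis using p1 p2 p3 p4 by blast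
qed

definition penrose :: "real^'n^'m \<Rightarrow> real^'m^'n \<Rightarrow> bool" where
  "penrose A B \<longleftrightarrow> A ** B ** A = A \<and> B ** A ** B = B \<and>
               transpose (A ** B) = A ** B \<and> transpose (B ** A) = B ** A"

lemma penrose_uniq:
  assumes "penrose A B" "penrose A C"
  shows "B = C"
proof -
  have b1: "A ** B ** A = A" and b2: "B ** A ** B = B" and b3: "transpose (A ** B) = A ** B"
    and b4: "transpose (B ** A) = B ** A" using assms(1) unfolding penrose_def by auto
  have c1: "A ** C ** A = A" and c2: "C ** A ** C = C" and c3: "transpose (A ** C) = A ** C"
    and c4: "transpose (C ** A) = C ** A" using assms(2) unfolding penrose_def by auto
  have tA1: "transpose A = transpose A ** (A ** C)"
    using c1 c3 by (metis matrix_transpose_mul matrix_mul_assoc)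
  have tA2: "transpose A = (B ** A) ** transpose A"
    using b1 b4 by (metis matrix_transpose_mul matrix_mul_assoc)
  have "B = B ** (transpose B ** transpose A)"
    using b2 b3 by (metis matrix_transpose_mul matrix_mul_assoc)
  also have "\<dots> = B ** (transpose B ** (transpose A ** (A ** C)))" using tA1 by simp
  also have "\<dots> = B ** (A ** B) ** (A ** C)"
    using b3 by (metis matrix_transpose_mul matrix_mul_assoc)
  also have "\<dots> = B ** A ** C" using b2 by (metis matrix_mul_assoc)
  finally have eB: "B = B ** A ** C" .
  have "C = (transpose A ** transpose C) ** C"
    using c2 c4 by (metis matrix_transpose_mul matrix_mul_assoc)
  also have "\<dots> = (((B ** A) ** transpose A) ** transpose C) ** C" using tA2 by simp
  also have "\<dots> = (B ** A) ** (C ** A) ** C"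
    using c4 by (metis matrix_transpose_mul matrix_mul_assoc)
  also have "\<dots> = B ** A ** C" using c2 by (metis matrix_mul_assoc)
  finally show ?thesis using eB by simp
qed

lemma pinv_penrose: "penrose A (pinv A)"
proof -
  have "\<exists>!B. penrose A B" using pinv_exists[of A] penrose_uniq unfolding penrose_def by blast
  from theI'[OF this] show ?thesis unfolding pinv_def penrose_def by simp
qed

lemma pinv_sym: "transpose (pinv A ** A) = pinv A ** A"
  using pinv_penrose unfolding penrose_def by blast

lemma scalar_bound:
  fixes f f' :: "real \<Rightarrow> real"
  assumes der: "\<And>x. c \<le> x \<Longrightarrow> x \<le> C \<Longrightarrow> DERIV f x :> f' x"
    and mb: "\<And>x. c \<le> x \<Longrightarrow> x \<le> C \<Longrightarrow> m \<le> \<sigma> * f' x"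
    and ab: "c \<le> a" "a \<le> C" "c \<le> b" "b \<le> C"
  shows "m * (a - b)^2 \<le> \<sigma> * ((a - b) * (f a - f b))"
proof -
  have key: "m * (v - u)^2 \<le> \<sigma> * ((v - u) * (f v - f u))"
    if uv: "u < v" and cu: "c \<le> u" and vC: "v \<le> C" for u v
  proof -
    have "\<exists>z. u < z \<and> z < v \<and> f v - f u = (v - u) * f' z"
      by (rule MVT2[OF uv]) (use der cu vC in auto)
    then obtain z where z: "u < z" "z < v" "f v - f u = (v - u) * f' z" by blast
    have "m \<le> \<sigma> * f' z" using mb z cu vC by auto
    hence "(v - u)^2 * m \<le> (v - u)^2 * (\<sigma> * f' z)" by (rule mult_left_mono) simp
    also have "\<dots> = \<sigma> * ((v - u) * (f v - f u))" using z by (simp add: power2_eq_square)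
    finally show ?thesis by (simp add: mult.commute)
  qed
  show ?thesis
  proof (cases a b rule: linorder_cases)
    case less
    from key[OF less] ab show ?thesis by (simp add: power2_commute algebra_simps)
  next
    case equal thus ?thesis by simp
  next
    case greater
    from key[OF greater] ab show ?thesis by simp
  qed
qed

lemma core:
  fixes P :: "real^'n^'n" and d g :: "real \<Rightarrow> real^'n"
  assumes sym: "transpose P = P"
    and hPd: "((\<lambda>t. P *v d t) \<longlongrightarrow> 0) at_top"
    and hQg: "((\<lambda>t. (mat 1 - P) *v g t) \<longlongrightarrow> 0) at_top"
    and bd: "eventually (\<lambda>t. norm (d t) \<le> K) at_top"
    and bg: "eventually (\<lambda>t. norm (g t) \<le> K) at_top"
    and m: "m > 0" and low: "eventually (\<lambda>t. m * (norm (d t))^2 \<le> \<bar>d t \<bullet> g t\<bar>) at_top"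
  shows "(d \<longlongrightarrow> 0) at_top"
proof -
  have split: "d t \<bullet> g t = (P *v d t) \<bullet> g t + d t \<bullet> ((mat 1 - P) *v g t)" for t
  proof -
    have "d t \<bullet> (P *v g t) = (d t v* P) \<bullet> g t" by (rule dot_lmul_matrix[symmetric])
    also have "d t v* P = P *v d t" using sym transpose_matrix_vector[of P "d t"] by simp
    finally have "d t \<bullet> (P *v g t) = (P *v d t) \<bullet> g t" .
    moreover have "g t = P *v g t + (mat 1 - P) *v g t" by (simp add: matrix_vector_mult_diff_rdistrib)
    ultimately show ?thesis by (metis inner_add_right)
  qed
  have ev1: "eventually (\<lambda>t. norm (d t \<bullet> g t) \<le> norm (P *v d t) * K + K * norm ((mat 1 - P) *v g t)) at_top"
    using bd bg
  proof eventually_elim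
    case (elim t)
    have "norm (d t \<bullet> g t) \<le> \<bar>(P *v d t) \<bullet> g t\<bar> + \<bar>d t \<bullet> ((mat 1 - P) *v g t)\<bar>"
      unfolding split by simp
    also have "\<dots> \<le> norm (P *v d t) * norm (g t) + norm (d t) * norm ((mat 1 - P) *v g t)"
      by (intro add_mono Cauchy_Schwarz_ineq2)
    also have "\<dots> \<le> norm (P *v d t) * K + K * norm ((mat 1 - P) *v g t)"
      using elim by (intro add_mono mult_left_mono mult_right_mono) auto
    finally show ?case .
  qed
  have "((\<lambda>t. norm (P *v d t) * K + K * norm ((mat 1 - P) *v g t)) \<longlongrightarrow> 0 * K + K * 0) at_top"
    by (intro tendsto_intros tendsto_norm_zero hPd hQg)
  hence "((\<lambda>t. d t \<bullet> g t) \<longlongrightarrow> 0) at_top" using Lim_null_comparison[OF ev1] by simp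
  hence lim2: "((\<lambda>t. sqrt (\<bar>d t \<bullet> g t\<bar> / m)) \<longlongrightarrow> 0) at_top"
    using tendsto_real_sqrt[OF tendsto_divide[OF tendsto_rabs[of "\<lambda>t. d t \<bullet> g t" 0] tendsto_const[of m]]] m
    by simp
  have "eventually (\<lambda>t. norm (d t) \<le> sqrt (\<bar>d t \<bullet> g t\<bar> / m)) at_top"
    using low
  proof eventually_elim
    case (elim t)
    thus ?case using m by (intro real_le_rsqrt) (simp add: field_simps)
  qed
  from Lim_null_comparison[OF this lim2] show ?thesis .
qed

lemma gen:
  fixes A :: "real^'n^'m" and x1 x2 :: "real \<Rightarrow> real^'n" and \<phi> \<phi>' :: "real \<Rightarrow> real"
  assumes c: "0 < c"
    and der: "\<And>x. c \<le> x \<Longrightarrow> x \<le> C \<Longrightarrow> DERIV \<phi> x :> \<phi>' x"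
    and mb: "\<And>x. c \<le> x \<Longrightarrow> x \<le> C \<Longrightarrow> m \<le> \<sigma> * \<phi>' x"
    and m: "0 < m" and sg: "\<bar>\<sigma>\<bar> = 1"
    and r1: "\<forall>t\<ge>0. \<forall>i. c \<le> x1 t $ i \<and> x1 t $ i \<le> C"
    and r2: "\<forall>t\<ge>0. \<forall>i. c \<le> x2 t $ i \<and> x2 t $ i \<le> C"
    and hA: "((\<lambda>t. A *v (x1 t - x2 t)) \<longlongrightarrow> 0) at_top"
    and hP: "((\<lambda>t. (mat 1 - pinv A ** A) *v ((\<chi> i. \<phi> (x1 t $ i)) - (\<chi> i. \<phi> (x2 t $ i)))) \<longlongrightarrow> 0) at_top"
  shows "((\<lambda>t. x1 t - x2 t) \<longlongrightarrow> 0) at_top"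
proof -
  define d where "d t = x1 t - x2 t" for t
  define g where "g t = (\<chi> i. \<phi> (x1 t $ i)) - (\<chi> i. \<phi> (x2 t $ i))" for t
  have "continuous_on {c..C} \<phi>"
    by (rule DERIV_continuous_on) (use der in \<open>auto intro: has_field_derivative_at_within\<close>)
  hence "bounded (\<phi> ` {c..C})" by (intro compact_imp_bounded compact_continuous_image) auto
  then obtain K0 where K0: "\<And>x. c \<le> x \<Longrightarrow> x \<le> C \<Longrightarrow> \<bar>\<phi> x\<bar> \<le> K0" unfolding bounded_real by (meson atLeastAtMost_iff image_eqI)
  define K where "K = real CARD('n) * (2 * K0 + 2 * C)"
  have ev0: "eventually (\<lambda>t::real. t \<ge> 0) at_top" by (rule eventually_ge_at_top)
  have bd: "eventually (\<lambda>t. norm (d t) \<le> K) at_top" using ev0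
  proof eventually_elim
    case (elim t)
    have "norm (d t) \<le> (\<Sum>i\<in>UNIV. \<bar>d t $ i\<bar>)" by (rule norm_le_l1_cart)
    also have "\<dots> \<le> real (card (UNIV::'n set)) * (2 * K0 + 2 * C)"
    proof (rule sum_bounded_above)
      fix i
      have "c \<le> x1 t $ i" "x1 t $ i \<le> C" "c \<le> x2 t $ i" "x2 t $ i \<le> C" using r1 r2 elim by auto
      moreover have "0 \<le> K0" using K0[of c] c \<open>c \<le> x1 t $ i\<close> \<open>x1 t $ i \<le> C\<close> by force
      ultimately show "\<bar>d t $ i\<bar> \<le> 2 * K0 + 2 * C" unfolding d_def using c by auto
    qed
    finally show ?case unfolding K_def by simp
  qed
  have bg: "eventually (\<lambda>t. norm (g t) \<le> K) at_top" using ev0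
  proof eventually_elim
    case (elim t)
    have "norm (g t) \<le> (\<Sum>i\<in>UNIV. \<bar>g t $ i\<bar>)" by (rule norm_le_l1_cart)
    also have "\<dots> \<le> real (card (UNIV::'n set)) * (2 * K0 + 2 * C)"
    proof (rule sum_bounded_above)
      fix i
      have "c \<le> x1 t $ i" "x1 t $ i \<le> C" "c \<le> x2 t $ i" "x2 t $ i \<le> C" using r1 r2 elim by auto
      hence "\<bar>\<phi> (x1 t $ i)\<bar> \<le> K0" "\<bar>\<phi> (x2 t $ i)\<bar> \<le> K0" "0 \<le> C" using K0 c by auto
      thus "\<bar>g t $ i\<bar> \<le> 2 * K0 + 2 * C" unfolding g_def by auto
    qed
    finally show ?case unfolding K_def by simp
  qed
  have low: "eventually (\<lambda>t. m * (norm (d t))^2 \<le> \<bar>d t \<bullet> g t\<bar>) at_top" using ev0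
  proof eventually_elim
    case (elim t)
    have "m * (norm (d t))^2 = (\<Sum>i\<in>UNIV. m * (d t $ i)^2)"
      unfolding power2_norm_eq_inner inner_vec_def by (simp add: sum_distrib_left power2_eq_square)
    also have "\<dots> \<le> (\<Sum>i\<in>UNIV. \<sigma> * (d t $ i * g t $ i))"
    proof (rule sum_mono)
      fix i
      have "c \<le> x1 t $ i" "x1 t $ i \<le> C" "c \<le> x2 t $ i" "x2 t $ i \<le> C" using r1 r2 elim by auto
      from scalar_bound[OF der mb this]
      show "m * (d t $ i)^2 \<le> \<sigma> * (d t $ i * g t $ i)" unfolding d_def g_def by simp
    qed
    also have "\<dots> = \<sigma> * (d t \<bullet> g t)" by (simp add: inner_vec_def sum_distrib_left)
    also have "\<dots> \<le> \<bar>\<sigma> * (d t \<bullet> g t)\<bar>" by simp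
    also have "\<dots> = \<bar>d t \<bullet> g t\<bar>" using sg by (simp add: abs_mult)
    finally show ?case .
  qed
  have hPd: "((\<lambda>t. (pinv A ** A) *v d t) \<longlongrightarrow> 0) at_top"
    using bounded_linear.tendsto[OF matrix_vector_mul_bounded_linear[of "pinv A"] hA]
    by (simp add: d_def matrix_vector_mul_assoc)
  have "(d \<longlongrightarrow> 0) at_top"
    by (rule core[OF pinv_sym hPd _ bd bg m low]) (use hP in \<open>simp add: g_def\<close>)
  thus ?thesis unfolding d_def .
qed

theorem mainTheorem13:
  fixes L :: nat and A :: "real^'n^'m" and x1 x2 :: "real \<Rightarrow> real^'n"
  assumes L: "L \<ge> 1"
    and b1: "\<exists>c C. 0 < c \<and> (\<forall>t\<ge>0. \<forall>i. c \<le> x1 t $ i \<and> x1 t $ i \<le> C)"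
    and b2: "\<exists>c C. 0 < c \<and> (\<forall>t\<ge>0. \<forall>i. c \<le> x2 t $ i \<and> x2 t $ i \<le> C)"
    and hA: "((\<lambda>t. A *v (x1 t - x2 t)) \<longlongrightarrow> 0) at_top"
    and hP: "if L = 2 then
        ((\<lambda>t. (mat 1 - pinv A ** A) *v (elog (x1 t) - elog (x2 t))) \<longlongrightarrow> 0) at_top
      else
        ((\<lambda>t. (mat 1 - pinv A ** A) *v
            (epowr (x1 t) (2 / real L - 1) - epowr (x2 t) (2 / real L - 1))) \<longlongrightarrow> 0) at_top"
  shows "((\<lambda>t. x1 t - x2 t) \<longlongrightarrow> 0) at_top"
proof -
  obtain c1 C1 where c1: "0 < c1" "\<forall>t\<ge>0. \<forall>i. c1 \<le> x1 t $ i \<and> x1 t $ i \<le> C1" using b1 by blast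
  obtain c2 C2 where c2: "0 < c2" "\<forall>t\<ge>0. \<forall>i. c2 \<le> x2 t $ i \<and> x2 t $ i \<le> C2" using b2 by blast
  define c where "c = min c1 c2"
  define C where "C = max C1 C2"
  have c: "0 < c" using c1 c2 unfolding c_def by simp
  have r1: "\<forall>t\<ge>0. \<forall>i. c \<le> x1 t $ i \<and> x1 t $ i \<le> C" using c1 unfolding c_def C_def
    by (meson max.coboundedI1 min.coboundedI1 order_trans)
  have r2: "\<forall>t\<ge>0. \<forall>i. c \<le> x2 t $ i \<and> x2 t $ i \<le> C" using c2 unfolding c_def C_def
    by (meson max.coboundedI2 min.coboundedI2 order_trans)
  have cC: "c \<le> C" using r1 by (meson order_trans order_refl)
  hence Cpos: "0 < C" using c by simp
  show ?thesis
  proof (cases "L = 2")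
    case True
    have hP': "((\<lambda>t. (mat 1 - pinv A ** A) *v ((\<chi> i. ln (x1 t $ i)) - (\<chi> i. ln (x2 t $ i)))) \<longlongrightarrow> 0) at_top"
      using hP True unfolding elog_def by simp
    show ?thesis
    proof (rule gen[OF c _ _ _ _ r1 r2 hA hP', where \<phi>' = "\<lambda>x. 1 / x" and \<sigma> = 1 and m = "1 / C"])
      fix x assume "c \<le> x" "x \<le> C"
      thus "DERIV ln x :> 1 / x" using c by (intro DERIV_ln_divide) simp
      show "1 / C \<le> 1 * (1 / x)" using c \<open>c \<le> x\<close> \<open>x \<le> C\<close> by (simp add: frac_le)
    qed (use Cpos in auto)
  next
    case False
    define p where "p = 2 / real L - 1"
    have p1: "p \<le> 1"
    proof -
      have "real L \<ge> 1" using L by simp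
      hence "2 / real L \<le> 2" by (simp add: divide_le_eq)
      thus ?thesis unfolding p_def by simp
    qed
    have p0: "p \<noteq> 0"
    proof
      assume "p = 0"
      hence "2 / real L = 1" unfolding p_def by simp
      hence "real L = 2" using L by (simp add: field_simps)
      thus False using False by simp
    qed
    have hP': "((\<lambda>t. (mat 1 - pinv A ** A) *v ((\<chi> i. (x1 t $ i) powr p) - (\<chi> i. (x2 t $ i) powr p))) \<longlongrightarrow> 0) at_top"
      using hP False unfolding epowr_def p_def by simp
    show ?thesis
    proof (rule gen[OF c _ _ _ _ r1 r2 hA hP', where \<phi>' = "\<lambda>x. p * x powr (p - 1)" and \<sigma> = "sgn p"
          and m = "\<bar>p\<bar> * C powr (p - 1)"])
      fix x assume x: "c \<le> x" "x \<le> C"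
      thus "DERIV (\<lambda>x. x powr p) x :> p * x powr (p - 1)" using c by (intro has_real_derivative_powr) simp
      have "C powr (p - 1) \<le> x powr (p - 1)" using x c p1 by (intro powr_mono2') auto
      hence "\<bar>p\<bar> * C powr (p - 1) \<le> \<bar>p\<bar> * x powr (p - 1)" by (rule mult_left_mono) simp
      also have "\<dots> = sgn p * (p * x powr (p - 1))" by (simp add: abs_sgn mult.assoc)
      finally show "\<bar>p\<bar> * C powr (p - 1) \<le> sgn p * (p * x powr (p - 1))" .
    qed (use Cpos p0 in \<open>auto simp: abs_sgn_eq\<close>)
  qed
qed

end
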